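(* Let $X$ be a Bruhat–Tits tree and let $\mathcal{G}$ be a closed subgroup of $\mathrm{Aut}(X)$ acting transitively on the vertex set $X^0$. Then the following three conditions are equivalent: (1) for any two pairs of vertices $(x_1,x_2)$, $(y_1,y_2)$ with $d(x_1,x_2)=d(y_1,y_2)$ there is $g\in\mathcal{G}$ with $g(x_i)=y_i$ for $i=1,2$; (2) for any vertices $x,y,z$ with $d(x,y)=d(x,z)$ there is $g\in\mathcal{G}$ with $g(x)=x$ and $g(y)=z$; (3) for any ends $\omega_1\neq\omega_2$ and $\sigma_1\neq\sigma_2$, any vertex $x_0$ on the apartment $[\omega_1,\omega_2]$ and any vertex $y_0$ on the apartment $[\sigma_1,\sigma_2]$, there is $g\in\mathcal{G}$ with $g(x_0)=y_0$ and $g(\omega_i)=\sigma_i$ for $i=1,2$. In particular, such a $\mathcal{G}$ satisfying any of these conditions is weakly two-transitive.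
   Context: A tree is a nonempty connected graph without cycles; it is a Bruhat–Tits tree if every vertex lies on exactly $m+1$ edges for some fixed integer $m\ge 2$. The distance $d(x,y)$ between vertices is the number of edges on the unique path joining them. $\mathrm{Aut}(X)$ is the group of bijections of $X^0$ preserving $d$, with the topology of pointwise convergence (as maps $X^0\to X^0$, $X^0$ discrete). An infinite path is a sequence $(x_i)_{i\in\mathbb{N}}$ of distinct vertices with consecutive ones adjacent; an end is an equivalence class of infinite paths, two paths being equivalent if they agree after a shift of index from some point on ($x_i=y_{i+k}$ for all $i>p$). Automorphisms act on ends. For distinct ends $\omega,\omega'$, the apartment $[\omega,\omega']$ is the unique doubly infinite path whose two halves represent $\omega$ and $\omega'$. A subgroup $\mathcal{G}\subseteq\mathrm{Aut}(X)$ is weakly two-transitive if it satisfies condition (1). *)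

theory Defs
  imports Main
begin

text \<open>A graph is given by an adjacency relation E on the vertex type 'a
(the vertex set X^0 is the whole type).\<close>

definition walk :: "('a \<Rightarrow> 'a \<Rightarrow> bool) \<Rightarrow> 'a list \<Rightarrow> bool" where
  "walk E w \<longleftrightarrow> w \<noteq> [] \<and> (\<forall>i < length w - 1. E (w ! i) (w ! Suc i))"

definition is_cycle :: "('a \<Rightarrow> 'a \<Rightarrow> bool) \<Rightarrow> 'a list \<Rightarrow> bool" where
  "is_cycle E c \<longleftrightarrow> walk E c \<and> length c \<ge> 4 \<and> hd c = last c \<and> distinct (tl c)"

definition is_tree :: "('a \<Rightarrow> 'a \<Rightarrow> bool) \<Rightarrow> bool" where
  "is_tree E \<longleftrightarrow> (\<forall>x y. E x y \<longrightarrow> E y x) \<and> (\<forall>x. \<not> E x x)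
     \<and> (\<forall>x y. \<exists>w. walk E w \<and> hd w = x \<and> last w = y)
     \<and> (\<nexists>c. is_cycle E c)"

definition bruhat_tits_tree :: "('a \<Rightarrow> 'a \<Rightarrow> bool) \<Rightarrow> bool" where
  "bruhat_tits_tree E \<longleftrightarrow> is_tree E \<and>
     (\<exists>m::nat. m \<ge> 2 \<and> (\<forall>v. finite {w. E v w} \<and> card {w. E v w} = m + 1))"

definition dist :: "('a \<Rightarrow> 'a \<Rightarrow> bool) \<Rightarrow> 'a \<Rightarrow> 'a \<Rightarrow> nat" where
  "dist E x y = (LEAST n. \<exists>w. walk E w \<and> hd w = x \<and> last w = y \<and> length w = n + 1)"

definition Aut :: "('a \<Rightarrow> 'a \<Rightarrow> bool) \<Rightarrow> ('a \<Rightarrow> 'a) set" where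
  "Aut E = {f. bij f \<and> (\<forall>x y. dist E (f x) (f y) = dist E x y)}"

definition is_subgroup :: "('a \<Rightarrow> 'a \<Rightarrow> bool) \<Rightarrow> ('a \<Rightarrow> 'a) set \<Rightarrow> bool" where
  "is_subgroup E G \<longleftrightarrow> G \<subseteq> Aut E \<and> id \<in> G \<and> (\<forall>f\<in>G. \<forall>g\<in>G. f \<circ> g \<in> G)
     \<and> (\<forall>g\<in>G. inv g \<in> G)"

text \<open>Closedness in the topology of pointwise convergence (X^0 discrete):
  every automorphism all of whose basic neighbourhoods (agreement on a finite
  set of vertices) meet G belongs to G.\<close>
definition closed_in_Aut :: "('a \<Rightarrow> 'a \<Rightarrow> bool) \<Rightarrow> ('a \<Rightarrow> 'a) set \<Rightarrow> bool" where
  "closed_in_Aut E G \<longleftrightarrow> (\<forall>f\<in>Aut E.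
      (\<forall>F. finite F \<longrightarrow> (\<exists>g\<in>G. \<forall>x\<in>F. g x = f x)) \<longrightarrow> f \<in> G)"

definition vertex_transitive :: "('a \<Rightarrow> 'a) set \<Rightarrow> bool" where
  "vertex_transitive G \<longleftrightarrow> (\<forall>x y. \<exists>g\<in>G. g x = y)"

definition inf_path :: "('a \<Rightarrow> 'a \<Rightarrow> bool) \<Rightarrow> (nat \<Rightarrow> 'a) \<Rightarrow> bool" where
  "inf_path E p \<longleftrightarrow> inj p \<and> (\<forall>i. E (p i) (p (Suc i)))"

definition path_equiv :: "(nat \<Rightarrow> 'a) \<Rightarrow> (nat \<Rightarrow> 'a) \<Rightarrow> bool" where
  "path_equiv x y \<longleftrightarrow> (\<exists>k N. \<forall>i>N. x i = y (i + k)) \<or> (\<exists>k N. \<forall>i>N. y i = x (i + k))"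

definition is_end :: "('a \<Rightarrow> 'a \<Rightarrow> bool) \<Rightarrow> (nat \<Rightarrow> 'a) set \<Rightarrow> bool" where
  "is_end E \<omega> \<longleftrightarrow> (\<exists>r. inf_path E r \<and> \<omega> = {s. inf_path E s \<and> path_equiv r s})"

definition end_image :: "('a \<Rightarrow> 'a) \<Rightarrow> (nat \<Rightarrow> 'a) set \<Rightarrow> (nat \<Rightarrow> 'a) set" where
  "end_image g \<omega> = (\<lambda>s. g \<circ> s) ` \<omega>"

definition biinf_path :: "('a \<Rightarrow> 'a \<Rightarrow> bool) \<Rightarrow> (int \<Rightarrow> 'a) \<Rightarrow> bool" where
  "biinf_path E b \<longleftrightarrow> inj b \<and> (\<forall>i. E (b i) (b (i + 1)))"

definition apartment :: "('a \<Rightarrow> 'a \<Rightarrow> bool) \<Rightarrow> (nat \<Rightarrow> 'a) set \<Rightarrow> (nat \<Rightarrow> 'a) set \<Rightarrow> 'a set" where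
  "apartment E \<omega>1 \<omega>2 = {x. \<exists>b. biinf_path E b \<and> (\<lambda>n. b (int n)) \<in> \<omega>1
      \<and> (\<lambda>n. b (- int n)) \<in> \<omega>2 \<and> x \<in> range b}"

definition weakly_two_transitive :: "('a \<Rightarrow> 'a \<Rightarrow> bool) \<Rightarrow> ('a \<Rightarrow> 'a) set \<Rightarrow> bool" where
  "weakly_two_transitive E G \<longleftrightarrow> (\<forall>x1 x2 y1 y2. dist E x1 x2 = dist E y1 y2 \<longrightarrow>
      (\<exists>g\<in>G. g x1 = y1 \<and> g x2 = y2))"

end

theory Submission
  imports "HOL-Analysis.Function_Topology" Defs
begin
lemma walk_Cons: "walk E (x # y # w) \<longleftrightarrow> E x y \<and> walk E (y # w)"
  unfolding walk_def by (auto simp: nth_Cons split: nat.splits)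

lemma walk_single[simp]: "walk E [x]"
  unfolding walk_def by auto

lemma walk_nth: "walk E w \<Longrightarrow> Suc i < length w \<Longrightarrow> E (w ! i) (w ! Suc i)"
  unfolding walk_def by auto

lemma walk_map_upt: "walk E (map f [0..<Suc n]) \<longleftrightarrow> (\<forall>t<n. E (f t) (f (Suc t)))"
  unfolding walk_def by (auto simp del: upt_Suc simp: nth_append)

lemma walk_append: "walk E p \<Longrightarrow> walk E q \<Longrightarrow> last p = hd q \<Longrightarrow> walk E (p @ tl q)"
proof (induction p rule: induct_list012)
  case 1 then show ?case by (simp add: walk_def)
next
  case (2 x) then show ?case by (cases q) auto
next
  case (3 x y zs) then show ?case by (simp add: walk_Cons)
qed

lemma walk_rev:
  assumes sym: "\<forall>x y. E x y \<longrightarrow> E y x" and w: "walk E w" shows "walk E (rev w)"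
  unfolding walk_def
proof (intro conjI allI impI)
  show "rev w \<noteq> []" using w by (simp add: walk_def)
  fix i assume i: "i < length (rev w) - 1"
  let ?n = "length w"
  have 1: "rev w ! i = w ! (?n - 1 - i)" using i by (simp add: rev_nth)
  have 2: "rev w ! Suc i = w ! (?n - 2 - i)" using i by (simp add: rev_nth)
  have "E (w ! (?n - 2 - i)) (w ! Suc (?n - 2 - i))" using w i by (intro walk_nth[OF w]) auto
  moreover have "Suc (?n - 2 - i) = ?n - 1 - i" using i by simp
  ultimately show "E (rev w ! i) (rev w ! Suc i)" using 1 2 sym by metis
qed

lemma walk_take: "walk E w \<Longrightarrow> 0 < n \<Longrightarrow> walk E (take n w)"
  unfolding walk_def by auto

lemma walk_drop: "walk E w \<Longrightarrow> n < length w \<Longrightarrow> walk E (drop n w)"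
  unfolding walk_def by (auto simp: add.commute)

lemma walk_butlast: "walk E w \<Longrightarrow> 2 \<le> length w \<Longrightarrow> walk E (butlast w)"
  unfolding walk_def by (auto simp: nth_butlast simp flip: length_0_conv)

definition nbw :: "('a \<Rightarrow> 'a \<Rightarrow> bool) \<Rightarrow> 'a list \<Rightarrow> bool" where
  "nbw E w \<longleftrightarrow> walk E w \<and> (\<forall>i. i + 2 < length w \<longrightarrow> w ! i \<noteq> w ! (i + 2))"

lemma distinct_nbw: "walk E w \<Longrightarrow> distinct w \<Longrightarrow> nbw E w"
  unfolding nbw_def by (auto simp: nth_eq_iff_index_eq)

lemma nbw_join:
  assumes p: "nbw E p" and q: "nbw E q" and pq: "last p = hd q"
    and lp: "2 \<le> length p" and lq: "2 \<le> length q" and ab: "p ! (length p - 2) \<noteq> q ! 1"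
  shows "nbw E (p @ tl q)"
proof -
  let ?W = "p @ tl q"
  have walkW: "walk E ?W" using p q pq by (intro walk_append) (auto simp: nbw_def)
  have A: "?W ! t = p ! t" if "t < length p" for t using that by (simp add: nth_append)
  have B: "?W ! t = q ! (t + 1 - length p)" if "length p - 1 \<le> t" "t < length p + length q - 1" for t
  proof (cases "t < length p")
    case True
    then have "t = length p - 1" using that by simp
    have "p \<noteq> []" using lp by auto
    then have "?W ! t = last p" using True \<open>t = length p - 1\<close> by (simp add: nth_append last_conv_nth)
    also have "\<dots> = q ! 0" using pq lq by (subst hd_conv_nth[symmetric]) auto
    finally show ?thesis using \<open>t = length p - 1\<close> lp by simp
  next
    case False
    then have "Suc (t - length p) = Suc t - length p" by simp
    then show ?thesis using that lq False by (simp add: nth_append nth_tl)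
  qed
  show ?thesis unfolding nbw_def
  proof (intro conjI allI impI walkW)
    fix i assume i: "i + 2 < length ?W"
    have lW: "length ?W = length p + length q - 1" using lq by simp
    consider "i + 2 < length p" | "i = length p - 2" | "length p - 1 \<le> i" by linarith
    then show "?W ! i \<noteq> ?W ! (i + 2)"
    proof cases
      case 1 then show ?thesis using A p by (simp add: nbw_def)
    next
      case 2
      have e: "i + 2 + 1 - length p = 1" using 2 lp by simp
      have "?W ! i = p ! (length p - 2)" using A 2 lp by simp
      moreover have "?W ! (i + 2) = q ! 1" using B[of "i+2"] 2 lp lW i e by simp
      ultimately show ?thesis using ab by simp
    next
      case 3
      have "?W ! i = q ! (i + 1 - length p)" using B 3 lW i by simp
      moreover have "?W ! (i+2) = q ! (i + 1 - length p + 2)"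
      proof -
        have "i + 2 + 1 - length p = i + 1 - length p + 2" using 3 lp by simp
        then show ?thesis using B[of "i+2"] 3 lW i by simp
      qed
      moreover have "i + 1 - length p + 2 < length q" using 3 lW i by simp
      ultimately show ?thesis using q unfolding nbw_def by auto
    qed
  qed
qed

lemma nbw_rev: assumes sym: "\<forall>x y. E x y \<longrightarrow> E y x" and w: "nbw E w" shows "nbw E (rev w)"
  unfolding nbw_def
proof (intro conjI allI impI)
  show "walk E (rev w)" using walk_rev[OF sym] w by (auto simp: nbw_def)
  fix i assume i: "i + 2 < length (rev w)"
  have "w ! (length w - 3 - i) \<noteq> w ! (length w - 3 - i + 2)" using w i unfolding nbw_def by auto
  moreover have "length w - 3 - i + 2 = length w - Suc i" using i by simp
  moreover have "length w - 3 - i = length w - Suc (i + 2)" using i by simp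
  ultimately show "rev w ! i \<noteq> rev w ! (i + 2)" using i by (simp add: rev_nth)
qed

lemma nbw_butlast: "nbw E w \<Longrightarrow> 2 \<le> length w \<Longrightarrow> nbw E (butlast w)"
  unfolding nbw_def by (auto simp: nth_butlast walk_butlast simp flip: length_0_conv)

locale tree =
  fixes E :: "'a \<Rightarrow> 'a \<Rightarrow> bool"
  assumes T: "is_tree E"
begin

lemma sym: "E x y \<Longrightarrow> E y x" using T unfolding is_tree_def by blast
lemma symA: "\<forall>x y. E x y \<longrightarrow> E y x" using sym by blast
lemma irrefl: "\<not> E x x" using T unfolding is_tree_def by blast
lemma conn: "\<exists>w. walk E w \<and> hd w = x \<and> last w = y" using T unfolding is_tree_def by blast
lemma nocyc: "\<not> is_cycle E c" using T unfolding is_tree_def by blast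

lemma nbw_distinct: assumes w: "nbw E w" shows "distinct w"
proof (rule ccontr)
  assume "\<not> distinct w"
  then have ex: "\<exists>j. \<exists>i<j. j < length w \<and> w ! i = w ! j"
    by (auto simp: distinct_conv_nth) (metis linorder_neqE_nat)
  define j0 where "j0 = (LEAST j. \<exists>i<j. j < length w \<and> w ! i = w ! j)"
  have "\<exists>i<j0. j0 < length w \<and> w ! i = w ! j0"
    unfolding j0_def using LeastI_ex[OF ex] .
  then obtain i0 where i0: "i0 < j0" "j0 < length w" "w ! i0 = w ! j0" by blast
  have minl: "\<not> (i < j \<and> w ! i = w ! j)" if "j < j0" for i j
  proof
    assume "i < j \<and> w ! i = w ! j"
    then have "j0 \<le> j" unfolding j0_def using that i0 by (intro Least_le) auto
    then show False using that by simp
  qed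
  have wk: "walk E w" using w by (simp add: nbw_def)
  define n where "n = j0 - i0"
  define f where "f = (\<lambda>t. w ! (i0 + t))"
  define c where "c = map f [0..<Suc n]"
  have n3: "3 \<le> n"
  proof (rule ccontr)
    assume "\<not> 3 \<le> n"
    then consider "n = 1" | "n = 2" using i0 n_def by linarith
    then show False
    proof cases
      case 1
      then have "j0 = Suc i0" using n_def i0 by simp
      then have "E (w ! i0) (w ! Suc i0)" using walk_nth[OF wk, of i0] i0 by simp
      then show False using irrefl i0 \<open>j0 = Suc i0\<close> by simp
    next
      case 2
      then have "j0 = i0 + 2" using n_def i0 by simp
      then have "w ! i0 \<noteq> w ! (i0 + 2)" using w i0 unfolding nbw_def by simp
      then show False using i0 \<open>j0 = i0 + 2\<close> by simp
    qed
  qed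
  have "is_cycle E c"
    unfolding is_cycle_def
  proof (intro conjI)
    show "walk E c" unfolding c_def walk_map_upt f_def
      using walk_nth[OF wk] i0 n_def by auto
    show "4 \<le> length c" using n3 c_def by simp
    show "hd c = last c" using i0 n_def by (simp add: c_def f_def hd_map last_map)
    have "tl c = map f [1..<Suc n]" by (simp add: c_def map_tl[symmetric] tl_upt)
    moreover have "inj_on f {1..<Suc n}"
    proof (rule inj_onI)
      fix a b assume a: "a \<in> {1..<Suc n}" and b: "b \<in> {1..<Suc n}" and fab: "f a = f b"
      show "a = b"
      proof (rule ccontr)
        assume "a \<noteq> b"
        then consider "a < b" | "b < a" by linarith
        then show False
        proof cases
          case 1
          show False
          proof (cases "b = n")
            case True
            then have "w ! (i0 + a) = w ! i0" using fab i0 n_def f_def by simp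
            moreover have "i0 + a < j0" "i0 < i0 + a" using a 1 True n_def i0 by auto
            ultimately show False using minl[of "i0 + a" i0] i0(3) by (metis minl)
          next
            case False
            then have "i0 + b < j0" using b 1 n_def i0 by auto
            moreover have "w ! (i0 + a) = w ! (i0 + b)" using fab f_def by simp
            ultimately show False using minl[of "i0 + b" "i0 + a"] 1 by auto
          qed
        next
          case 2
          show False
          proof (cases "a = n")
            case True
            then have "w ! (i0 + b) = w ! i0" using fab i0 n_def f_def by simp
            moreover have "i0 + b < j0" "i0 < i0 + b" using b 2 True n_def i0 by auto
            ultimately show False using minl[of "i0 + b" i0] i0(3) by (metis minl)
          next
            case False
            then have "i0 + a < j0" using a 2 n_def i0 by auto
            moreover have "w ! (i0 + b) = w ! (i0 + a)" using fab f_def by simp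
            ultimately show False using minl[of "i0 + a" "i0 + b"] 2 by auto
          qed
        qed
      qed
    qed
    ultimately show "distinct (tl c)" by (simp only: distinct_map distinct_upt set_upt)
  qed
  then show False using nocyc by blast
qed

end

lemma last_append_tl: "q \<noteq> [] \<Longrightarrow> last p = hd q \<Longrightarrow> p \<noteq> [] \<Longrightarrow> last (p @ tl q) = last q"
  by (cases q) auto

context tree begin

lemma nbw_closed: assumes "nbw E w" "hd w = last w" shows "length w = 1"
proof (rule ccontr)
  assume "length w \<noteq> 1"
  moreover have "w \<noteq> []" using assms by (simp add: nbw_def walk_def)
  moreover have "0 < length w" using \<open>w \<noteq> []\<close> by simp
  ultimately have "2 \<le> length w" by linarith
  moreover have "distinct w" using nbw_distinct assms by blast
  ultimately have "w ! 0 \<noteq> w ! (length w - 1)" by (subst nth_eq_iff_index_eq) auto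
  then show False using assms(2) \<open>w \<noteq> []\<close> by (simp add: hd_conv_nth last_conv_nth)
qed

lemma nbw_ne: "nbw E w \<Longrightarrow> w \<noteq> []" by (simp add: nbw_def walk_def)

lemma nbw_unique: "nbw E p \<Longrightarrow> nbw E q \<Longrightarrow> hd p = hd q \<Longrightarrow> last p = last q \<Longrightarrow> p = q"
proof (induction "length p" arbitrary: p q rule: less_induct)
  case less
  note p = less.prems(1) and q = less.prems(2)
  have pne: "p \<noteq> []" and qne: "q \<noteq> []" using p q nbw_ne by auto
  show ?case
  proof (cases "length p = 1 \<or> length q = 1")
    case True
    have "hd p = last p \<or> hd q = last q"
      using True pne qne by (auto simp: hd_conv_nth last_conv_nth)
    then have "hd p = last p" "hd q = last q" using less.prems by auto
    then have "length p = 1" "length q = 1" using nbw_closed p q less.prems by auto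
    then show ?thesis using less.prems pne qne
      by (metis One_nat_def hd_conv_nth length_0_conv length_Suc_conv nth_Cons_0)
  next
    case False
    have "length p \<noteq> 0" "length q \<noteq> 0" using pne qne by auto
    then have lp: "2 \<le> length p" and lq: "2 \<le> length q" using False by linarith+
    show ?thesis
    proof (cases "p ! (length p - 2) = q ! (length q - 2)")
      case True
      have bp: "nbw E (butlast p)" "nbw E (butlast q)" using nbw_butlast p q lp lq by auto
      have h: "hd (butlast p) = hd (butlast q)" using less.prems lp lq
      proof -
        have "hd (butlast xs) = hd xs" if "2 \<le> length xs" for xs :: "'a list"
          using that by (cases xs) auto
        then show ?thesis using less.prems lp lq by metis
      qed
      have l: "last (butlast p) = last (butlast q)" using True lp lq
        by (simp add: last_conv_nth nth_butlast numeral_2_eq_2 flip: length_0_conv)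
      have "butlast p = butlast q"
        using less.hyps[OF _ bp h l] lp by simp
      then show ?thesis using less.prems pne qne by (metis append_butlast_last_id)
    next
      case False
      have rq: "nbw E (rev q)" using nbw_rev[OF symA q] .
      have j: "nbw E (p @ tl (rev q))"
      proof (rule nbw_join[OF p rq])
        show "last p = hd (rev q)" using less.prems by (simp add: hd_rev)
        show "2 \<le> length p" by fact
        show "2 \<le> length (rev q)" using lq by simp
        show "p ! (length p - 2) \<noteq> rev q ! 1" using False lq by (simp add: rev_nth numeral_2_eq_2)
      qed
      have "hd (p @ tl (rev q)) = last (p @ tl (rev q))"
      proof -
        have "tl (rev q) \<noteq> []" using lq by (cases "rev q") auto
        then have "last (p @ tl (rev q)) = last (rev q)" by (simp add: last_tl)
        also have "\<dots> = hd q" by (simp add: last_rev)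
        finally show ?thesis using less.prems pne by simp
      qed
      then have "length (p @ tl (rev q)) = 1" using nbw_closed j by blast
      then show ?thesis using lp lq by simp
    qed
  qed
qed

lemma dist_ex: "\<exists>w. walk E w \<and> hd w = x \<and> last w = y \<and> length w = dist E x y + 1"
proof -
  obtain w where w: "walk E w" "hd w = x" "last w = y" using conn by blast
  then have "length w = (length w - 1) + 1" by (simp add: walk_def)
  then have ex: "\<exists>n. \<exists>w. walk E w \<and> hd w = x \<and> last w = y \<and> length w = n + 1" using w by blast
  show ?thesis unfolding dist_def by (rule LeastI_ex[OF ex])
qed

lemma dist_le: "walk E w \<Longrightarrow> hd w = x \<Longrightarrow> last w = y \<Longrightarrow> dist E x y \<le> length w - 1"
  unfolding dist_def by (rule Least_le) (auto simp: walk_def)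

lemma dist_self[simp]: "dist E x x = 0"
  using dist_le[of "[x]" x x] by simp

lemma dist_0: "dist E x y = 0 \<Longrightarrow> x = y"
  using dist_ex[of x y] by (auto simp: length_Suc_conv)

lemma dist_eq_0_iff: "dist E x y = 0 \<longleftrightarrow> x = y"
  using dist_0 by auto

lemma dist_sym: "dist E x y = dist E y x"
proof -
  have "dist E y x \<le> dist E x y" for x y
  proof -
    obtain w where w: "walk E w" "hd w = x" "last w = y" "length w = dist E x y + 1"
      using dist_ex by blast
    have "w \<noteq> []" using w by (simp add: walk_def)
    then show ?thesis using dist_le[of "rev w" y x] walk_rev[OF symA w(1)] w
      by (simp add: hd_rev last_rev)
  qed
  then show ?thesis by (simp add: le_antisym)
qed

lemma dist_triangle: "dist E x z \<le> dist E x y + dist E y z"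
proof -
  obtain p where p: "walk E p" "hd p = x" "last p = y" "length p = dist E x y + 1"
    using dist_ex by blast
  obtain q where q: "walk E q" "hd q = y" "last q = z" "length q = dist E y z + 1"
    using dist_ex by blast
  have pne: "p \<noteq> []" and qne: "q \<noteq> []" using p q by (auto simp: walk_def)
  have "walk E (p @ tl q)" using walk_append[OF p(1) q(1)] p q by auto
  moreover have "hd (p @ tl q) = x" using p pne by simp
  moreover have "last (p @ tl q) = z"
    using p q qne pne last_append_tl by metis
  ultimately have "dist E x z \<le> length (p @ tl q) - 1" using dist_le by blast
  then show ?thesis using p q by simp
qed

lemma dist_1: "dist E x y = 1 \<longleftrightarrow> E x y"
proof
  assume "E x y"
  then have "dist E x y \<le> 1" using dist_le[of "[x,y]" x y] by (simp add: walk_Cons)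
  moreover have "x \<noteq> y" using \<open>E x y\<close> irrefl by auto
  moreover have "dist E x y \<noteq> 0" using dist_0 \<open>x \<noteq> y\<close> by blast
  ultimately show "dist E x y = 1" by linarith
next
  assume d: "dist E x y = 1"
  obtain w where w: "walk E w" "hd w = x" "last w = y" "length w = dist E x y + 1"
    using dist_ex by blast
  then obtain a b where "w = [a, b]" using d by (auto simp: length_Suc_conv numeral_2_eq_2)
  then show "E x y" using w by (simp add: walk_Cons)
qed

lemma shortest_distinct:
  assumes w: "walk E w" "hd w = x" "last w = y" "length w = dist E x y + 1"
  shows "distinct w"
proof (rule ccontr)
  assume "\<not> distinct w"
  then obtain i j where ij: "i < j" "j < length w" "w ! i = w ! j"
    by (auto simp: distinct_conv_nth) (metis linorder_neqE_nat)
  let ?a = "take (Suc i) w" and ?b = "drop j w"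
  have wa: "walk E ?a" using walk_take w by blast
  have wb: "walk E ?b" using walk_drop w ij by blast
  have "last ?a = w ! i" using ij by (simp add: take_Suc_conv_app_nth)
  then have lab: "last ?a = hd ?b" using ij by (simp add: hd_drop_conv_nth)
  have "walk E (?a @ tl ?b)" using walk_append[OF wa wb lab] .
  moreover have "hd (?a @ tl ?b) = x" using w ij by (cases w) auto
  moreover have "last (?a @ tl ?b) = y"
  proof (cases "tl ?b = []")
    case True
    then have "length ?b = 1" using ij by (cases ?b) auto
    then have "j = length w - 1" using ij by simp
    have "w \<noteq> []" using ij by auto
    then have "w ! j = y" using w \<open>j = length w - 1\<close> by (simp add: last_conv_nth)
    then show ?thesis using True \<open>last ?a = w ! i\<close> ij by simp
  next
    case False
    then show ?thesis using w ij by (simp add: last_tl)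
  qed
  ultimately have "dist E x y \<le> length (?a @ tl ?b) - 1" using dist_le by blast
  moreover have "length (?a @ tl ?b) = length w - (j - i)" using ij by simp
  ultimately show False using ij w(4) by simp
qed

lemma distinct_walk_dist:
  assumes w: "walk E w" "distinct w" shows "length w = dist E (hd w) (last w) + 1"
proof -
  obtain v where v: "walk E v" "hd v = hd w" "last v = last w" "length v = dist E (hd w) (last w) + 1"
    using dist_ex by blast
  have "nbw E v" using distinct_nbw v shortest_distinct by blast
  moreover have "nbw E w" using distinct_nbw w by blast
  ultimately have "v = w" using nbw_unique v by metis
  then show ?thesis using v by simp
qed

lemma between_unique:
  assumes 1: "dist E u v + dist E v w = dist E u w"
    and 2: "dist E u v' + dist E v' w = dist E u w"
    and 3: "dist E u v = dist E u v'"
  shows "v = v'"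
proof -
  have geo: "\<exists>W. nbw E W \<and> hd W = u \<and> last W = w \<and> W ! dist E u z = z"
    if z: "dist E u z + dist E z w = dist E u w" for z
  proof -
    obtain p where p: "walk E p" "hd p = u" "last p = z" "length p = dist E u z + 1"
      using dist_ex by blast
    obtain q where q: "walk E q" "hd q = z" "last q = w" "length q = dist E z w + 1"
      using dist_ex by blast
    have pne: "p \<noteq> []" and qne: "q \<noteq> []" using p q by (auto simp: walk_def)
    let ?W = "p @ tl q"
    have "walk E ?W" using walk_append[OF p(1) q(1)] p q by auto
    moreover have "hd ?W = u" using p pne by simp
    moreover have "last ?W = w"
      using p q qne pne last_append_tl by metis
    moreover have "length ?W = dist E u w + 1" using p q z by simp
    ultimately have "nbw E ?W" using shortest_distinct distinct_nbw by metis
    moreover have "?W ! dist E u z = z" using p pne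
      by (simp add: nth_append last_conv_nth)
    ultimately show ?thesis using \<open>hd ?W = u\<close> \<open>last ?W = w\<close> by blast
  qed
  obtain W where W: "nbw E W" "hd W = u" "last W = w" "W ! dist E u v = v" using geo[OF 1] by blast
  obtain W' where W': "nbw E W'" "hd W' = u" "last W' = w" "W' ! dist E u v' = v'" using geo[OF 2] by blast
  have "W = W'" using nbw_unique[OF W(1) W'(1)] W(2,3) W'(2,3) by simp
  then show ?thesis using W(4) W'(4) 3 by metis
qed

lemma dist_Suc: assumes "dist E c y = Suc r" shows "\<exists>v. E v y \<and> dist E c v = r"
proof -
  obtain W where W: "walk E W" "hd W = c" "last W = y" "length W = dist E c y + 1"
    using dist_ex by blast
  have e: "E (W ! r) (W ! Suc r)" using walk_nth[OF W(1), of r] W assms by simp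
  have y: "W ! Suc r = y" using W assms by (simp add: last_conv_nth flip: length_0_conv)
  have "dist E c (W ! r) \<le> r"
    using dist_le[of "take (Suc r) W" c "W ! r"] walk_take[OF W(1)] W assms
    by (simp add: last_conv_nth hd_conv_nth flip: length_0_conv)
  moreover have "Suc r \<le> dist E c (W ! r) + 1"
    using dist_triangle[of c y "W ! r"] e y dist_1 assms by (metis dist_sym)
  ultimately show ?thesis using e y by (intro exI[of _ "W ! r"]) auto
qed

lemma ball_finite:
  assumes fin: "\<And>v. finite {w. E v w}"
  shows "finite {y. dist E c y \<le> r}"
proof (induction r)
  case 0 then show ?case using dist_0 by (simp add: dist_eq_0_iff)
next
  case (Suc r)
  have "{y. dist E c y \<le> Suc r} \<subseteq> {y. dist E c y \<le> r} \<union> (\<Union>v\<in>{y. dist E c y \<le> r}. {w. E v w})"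
  proof
    fix y assume "y \<in> {y. dist E c y \<le> Suc r}"
    then have "dist E c y \<le> r \<or> dist E c y = Suc r" by auto
    then show "y \<in> {y. dist E c y \<le> r} \<union> (\<Union>v\<in>{y. dist E c y \<le> r}. {w. E v w})"
      using dist_Suc by fastforce
  qed
  moreover have "finite ({y. dist E c y \<le> r} \<union> (\<Union>v\<in>{y. dist E c y \<le> r}. {w. E v w}))"
    using Suc fin by auto
  ultimately show ?case by (rule finite_subset)
qed

end

definition nbseq :: "('a \<Rightarrow> 'a \<Rightarrow> bool) \<Rightarrow> (nat \<Rightarrow> 'a) \<Rightarrow> bool" where
  "nbseq E s \<longleftrightarrow> (\<forall>i. E (s i) (s (Suc i))) \<and> (\<forall>i. s (i + 2) \<noteq> s i)"

lemma path_equiv_alt: "path_equiv x y \<longleftrightarrow> (\<exists>a b N. \<forall>i>N. x (i + a) = y (i + b))"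
proof
  assume "path_equiv x y"
  then show "\<exists>a b N. \<forall>i>N. x (i + a) = y (i + b)"
    unfolding path_equiv_def by (metis add_0_right)
next
  assume "\<exists>a b N. \<forall>i>N. x (i + a) = y (i + b)"
  then obtain a b N where h: "\<forall>i>N. x (i + a) = y (i + b)" by blast
  show "path_equiv x y"
  proof (cases "a \<le> b")
    case True
    have "\<forall>j>N + a. x j = y (j + (b - a))"
    proof (intro allI impI)
      fix j assume "j > N + a"
      then have "j - a > N" by simp
      then have "x (j - a + a) = y (j - a + b)" using h by blast
      then show "x j = y (j + (b - a))" using \<open>j > N + a\<close> True by (simp add: algebra_simps)
    qed
    then show ?thesis unfolding path_equiv_def by blast
  next
    case False
    have "\<forall>j>N + b. y j = x (j + (a - b))"
    proof (intro allI impI)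
      fix j assume "j > N + b"
      then have "j - b > N" by simp
      then have "x (j - b + a) = y (j - b + b)" using h by blast
      then show "y j = x (j + (a - b))" using \<open>j > N + b\<close> False by (simp add: algebra_simps)
    qed
    then show ?thesis unfolding path_equiv_def by blast
  qed
qed

lemma path_equiv_refl: "path_equiv x x"
  unfolding path_equiv_def by (metis add_0_right)

lemma path_equiv_sym: "path_equiv x y \<Longrightarrow> path_equiv y x"
  unfolding path_equiv_def by blast

lemma path_equiv_trans: assumes "path_equiv x y" "path_equiv y z" shows "path_equiv x z"
proof -
  obtain a b N where 1: "\<forall>i>N. x (i + a) = y (i + b)" using assms(1) path_equiv_alt by blast
  obtain c d M where 2: "\<forall>i>M. y (i + c) = z (i + d)" using assms(2) path_equiv_alt by blast
  have "\<forall>i>N + M. x (i + (a + c)) = z (i + (b + d))"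
  proof (intro allI impI)
    fix i assume i: "i > N + M"
    have "x ((i + c) + a) = y ((i + c) + b)" using 1 i by simp
    moreover have "y ((i + b) + c) = z ((i + b) + d)" using 2 i by simp
    ultimately show "x (i + (a + c)) = z (i + (b + d))" by (simp add: algebra_simps)
  qed
  then show ?thesis using path_equiv_alt by blast
qed

lemma path_equiv_comp: "path_equiv x y \<Longrightarrow> path_equiv (h \<circ> x) (h \<circ> y)"
  unfolding path_equiv_def by (auto; metis)

lemma end_class: assumes "is_end E \<omega>" "s \<in> \<omega>" shows "\<omega> = {t. inf_path E t \<and> path_equiv s t}"
proof -
  obtain r where r: "inf_path E r" "\<omega> = {s. inf_path E s \<and> path_equiv r s}"
    using assms(1) unfolding is_end_def by blast
  then have rs: "path_equiv r s" using assms(2) by blast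
  show ?thesis using r rs path_equiv_trans path_equiv_sym by blast
qed

lemma nbseq_walk:
  assumes s: "nbseq E s" shows "nbw E (map (\<lambda>t. s (i + t)) [0..<Suc n])"
  unfolding nbw_def
proof (intro conjI allI impI)
  show "walk E (map (\<lambda>t. s (i + t)) [0..<Suc n])"
    unfolding walk_map_upt using s by (simp add: nbseq_def)
  fix j assume j: "j + 2 < length (map (\<lambda>t. s (i + t)) [0..<Suc n])"
  have neq: "s (i + j) \<noteq> s (Suc (Suc (i + j)))" using s unfolding nbseq_def by (metis add_2_eq_Suc')
  show "map (\<lambda>t. s (i + t)) [0..<Suc n] ! j \<noteq> map (\<lambda>t. s (i + t)) [0..<Suc n] ! (j + 2)"
    using j neq by (simp del: upt_Suc add: nth_append)
qed

context tree begin

lemma nbseq_dist: assumes s: "nbseq E s" shows "dist E (s i) (s (i + n)) = n"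
proof -
  let ?w = "map (\<lambda>t. s (i + t)) [0..<Suc n]"
  have nb: "nbw E ?w" using nbseq_walk[OF s] .
  have d: "distinct ?w" using nbw_distinct[OF nb] .
  have w: "walk E ?w" using nb unfolding nbw_def by blast
  have "length ?w = dist E (hd ?w) (last ?w) + 1" using distinct_walk_dist[OF w d] .
  moreover have "hd ?w = s i" by (simp del: upt_Suc add: hd_map hd_upt)
  moreover have "last ?w = s (i + n)" by (simp del: upt_Suc add: last_map)
  ultimately show ?thesis by simp
qed

lemma nbseq_inj: assumes s: "nbseq E s" shows "inj s"
proof (rule injI)
  fix a b assume ab: "s a = s b"
  show "a = b"
  proof (rule ccontr)
    assume "a \<noteq> b"
    then consider "a < b" | "b < a" by linarith
    then show False
    proof cases
      case 1
      then have "dist E (s a) (s (a + (b - a))) = b - a" using nbseq_dist[OF s] by blast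
      then show False using 1 ab by simp
    next
      case 2
      then have "dist E (s b) (s (b + (a - b))) = a - b" using nbseq_dist[OF s] by blast
      then show False using 2 ab by simp
    qed
  qed
qed

lemma nbseq_inf_path: "nbseq E s \<Longrightarrow> inf_path E s"
  using nbseq_inj unfolding inf_path_def nbseq_def by blast

lemma biinf_nbseq: assumes b: "biinf_path E b" shows "nbseq E (\<lambda>n. b (i + int n))"
  unfolding nbseq_def
proof (intro conjI allI)
  fix n
  have "i + int (Suc n) = (i + int n) + 1" by simp
  then show "E (b (i + int n)) (b (i + int (Suc n)))" using b unfolding biinf_path_def
    by presburger
  have "i + int (n + 2) \<noteq> i + int n" by simp
  then show "b (i + int (n + 2)) \<noteq> b (i + int n)" using b unfolding biinf_path_def inj_def by blast
qed

lemma biinf_dist: assumes b: "biinf_path E b" "i \<le> j" shows "dist E (b i) (b j) = nat (j - i)"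
proof -
  have "dist E (b (i + int 0)) (b (i + int (0 + nat (j - i)))) = nat (j - i)"
    using nbseq_dist[OF biinf_nbseq[OF b(1)]] .
  then show ?thesis using b(2) by simp
qed

lemma Aut_E: assumes f: "f \<in> Aut E" shows "E (f x) (f y) \<longleftrightarrow> E x y"
  using f dist_1[of "f x" "f y"] dist_1[of x y] unfolding Aut_def by auto

lemma Aut_inv: assumes f: "f \<in> Aut E" shows "inv f \<in> Aut E"
proof -
  have bf: "bij f" using f by (simp add: Aut_def)
  have "dist E (inv f x) (inv f y) = dist E x y" for x y
  proof -
    have "dist E (inv f x) (inv f y) = dist E (f (inv f x)) (f (inv f y))"
      using f by (simp add: Aut_def)
    also have "\<dots> = dist E x y" using bf by (simp add: bij_is_surj surj_f_inv_f)
    finally show ?thesis .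
  qed
  then show ?thesis using bf bij_imp_bij_inv unfolding Aut_def by blast
qed

lemma Aut_inf_path: "f \<in> Aut E \<Longrightarrow> inf_path E s \<Longrightarrow> inf_path E (f \<circ> s)"
  unfolding inf_path_def using Aut_E by (auto simp: Aut_def bij_is_inj inj_compose)

lemma end_image_class:
  assumes f: "f \<in> Aut E" and r: "inf_path E r"
  shows "end_image f {s. inf_path E s \<and> path_equiv r s} = {t. inf_path E t \<and> path_equiv (f \<circ> r) t}"
proof
  show "end_image f {s. inf_path E s \<and> path_equiv r s} \<subseteq> {t. inf_path E t \<and> path_equiv (f \<circ> r) t}"
    unfolding end_image_def using Aut_inf_path[OF f] path_equiv_comp by blast
next
  show "{t. inf_path E t \<and> path_equiv (f \<circ> r) t} \<subseteq> end_image f {s. inf_path E s \<and> path_equiv r s}"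
  proof
    fix t assume t: "t \<in> {t. inf_path E t \<and> path_equiv (f \<circ> r) t}"
    have bf: "bij f" using f by (simp add: Aut_def)
    have fi: "f \<circ> (inv f \<circ> t) = t" using bf by (auto simp: bij_is_surj surj_f_inv_f)
    have ir: "inv f \<circ> (f \<circ> r) = r" using bf by (auto simp: bij_is_inj)
    have "inf_path E (inv f \<circ> t)" using Aut_inf_path[OF Aut_inv[OF f]] t by blast
    moreover have "path_equiv r (inv f \<circ> t)"
      using path_equiv_comp[of "f \<circ> r" t "inv f"] t ir by simp
    ultimately show "t \<in> end_image f {s. inf_path E s \<and> path_equiv r s}"
      unfolding end_image_def using fi by (metis (mono_tags, lifting) image_eqI mem_Collect_eq)
  qed
qed

lemma ray_exists:
  assumes deg: "\<And>v x. \<exists>w. E v w \<and> w \<noteq> x"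
  shows "\<exists>s. s 0 = a \<and> s 1 \<noteq> p \<and> nbseq E s"
proof -
  define nx where "nx = (\<lambda>x y. SOME w. E y w \<and> w \<noteq> x)"
  have nx: "E y (nx x y) \<and> nx x y \<noteq> x" for x y unfolding nx_def using someI_ex[OF deg] .
  define st where "st = rec_nat (p, a) (\<lambda>_ (x, y). (y, nx x y))"
  have st0: "st 0 = (p, a)" by (simp add: st_def)
  have stS: "st (Suc n) = (snd (st n), nx (fst (st n)) (snd (st n)))" for n
    by (simp add: st_def split: prod.splits)
  define s where "s = (\<lambda>n. snd (st n))"
  have "s 0 = a" by (simp add: s_def st0)
  moreover have "s 1 \<noteq> p" using nx by (simp add: s_def stS st0)
  moreover have "nbseq E s" unfolding nbseq_def
  proof (intro conjI allI)
    fix i show "E (s i) (s (Suc i))" using nx by (simp add: s_def stS)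
    have "s (i + 2) = nx (s i) (s (Suc i))" by (simp add: s_def stS)
    then show "s (i + 2) \<noteq> s i" using nx by simp
  qed
  ultimately show ?thesis by blast
qed

lemma ray_extend:
  assumes deg: "\<And>v x. \<exists>w. E v w \<and> w \<noteq> x"
    and L: "nbw E L" "2 \<le> length L"
  shows "\<exists>r. nbseq E r \<and> (\<forall>i<length L. r i = L ! i)"
proof -
  let ?n = "length L"
  obtain s where s: "s 0 = L ! (?n - 1)" "s 1 \<noteq> L ! (?n - 2)" "nbseq E s"
    using ray_exists[OF deg] by blast
  define r where "r = (\<lambda>i. if i < ?n then L ! i else s (i - (?n - 1)))"
  have r1: "r i = L ! i" if "i < ?n" for i using that by (simp add: r_def)
  have r2: "r i = s (i - (?n - 1))" if "?n - 1 \<le> i" for i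
  proof (cases "i < ?n")
    case True then have "i = ?n - 1" using that by simp
    then show ?thesis using True s(1) by (simp add: r_def)
  next
    case False then show ?thesis by (simp add: r_def)
  qed
  have "nbseq E r" unfolding nbseq_def
  proof (intro conjI allI)
    fix i
    show "E (r i) (r (Suc i))"
    proof (cases "Suc i < ?n")
      case True then show ?thesis using r1 L walk_nth[of E L i] by (simp add: nbw_def)
    next
      case False
      then have e: "Suc i - (?n - 1) = Suc (i - (?n - 1))" using L(2) by simp
      have "r i = s (i - (?n - 1))" "r (Suc i) = s (Suc i - (?n - 1))" using r2 L(2) False by auto
      then have "r i = s (i - (?n - 1))" "r (Suc i) = s (Suc (i - (?n - 1)))" using e by auto
      then show ?thesis using s(3) by (simp add: nbseq_def)
    qed
    consider "i + 2 < ?n" | "i = ?n - 2" | "?n - 1 \<le> i" by linarith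
    then show "r (i + 2) \<noteq> r i"
    proof cases
      case 1 then show ?thesis using r1 L unfolding nbw_def by auto
    next
      case 2
      then have "i + 2 - (?n - 1) = 1" using L(2) by simp
      then have "r (i + 2) = s 1" using r2[of "i+2"] L(2) 2 by simp
      moreover have "r i = L ! (?n - 2)" using r1 2 L(2) by simp
      ultimately show ?thesis using s(2) by simp
    next
      case 3
      then have e: "i + 2 - (?n - 1) = i - (?n - 1) + 2" by simp
      have "r (i + 2) = s (i - (?n - 1) + 2)" "r i = s (i - (?n - 1))" using r2[of "i+2"] r2[of i] 3 e by auto
      then show ?thesis using s(3) by (simp add: nbseq_def)
    qed
  qed
  then show ?thesis using r1 by blast
qed

end

context tree begin

lemma zseq_nbseq:
  assumes e: "\<forall>i. E (b i) (b (i + 1))" and n: "\<forall>i. b (i + 2) \<noteq> b i"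
  shows "nbseq E (\<lambda>n. b (i + int n))"
  unfolding nbseq_def
proof (intro conjI allI)
  fix n
  have "i + int (Suc n) = (i + int n) + 1" by simp
  then show "E (b (i + int n)) (b (i + int (Suc n)))" using e by presburger
  have "i + int (n + 2) = (i + int n) + 2" by simp
  then show "b (i + int (n + 2)) \<noteq> b (i + int n)" using n by presburger
qed

lemma zseq_biinf:
  assumes e: "\<forall>i. E (b i) (b (i + 1))" and n: "\<forall>i. b (i + 2) \<noteq> b i"
  shows "biinf_path E b"
  unfolding biinf_path_def
proof (intro conjI e)
  show "inj b"
  proof (rule injI)
    fix p q assume pq: "b p = b q"
    show "p = q"
    proof (rule ccontr)
      assume "p \<noteq> q"
      then consider "p < q" | "q < p" by linarith
      then show False
      proof cases
        case 1
        have "inj (\<lambda>n. b (p + int n))" using nbseq_inj[OF zseq_nbseq[OF e n]] .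
        moreover have "b (p + int 0) = b (p + int (nat (q - p)))" using pq 1 by simp
        ultimately show False using 1 unfolding inj_def by fastforce
      next
        case 2
        have "inj (\<lambda>n. b (q + int n))" using nbseq_inj[OF zseq_nbseq[OF e n]] .
        moreover have "b (q + int 0) = b (q + int (nat (p - q)))" using pq 2 by simp
        ultimately show False using 2 unfolding inj_def by fastforce
      qed
    qed
  qed
qed

lemma glue:
  assumes r: "nbseq E r" and r': "nbseq E r'" and r0: "r' 0 = r 0" and r1: "r' 1 \<noteq> r 1"
  defines "b \<equiv> (\<lambda>i::int. if 0 \<le> i then r (nat i) else r' (nat (- i)))"
  shows "biinf_path E b" "(\<lambda>n. b (int n)) = r" "(\<lambda>n. b (- int n)) = r'"
proof -
  have rE: "E (r n) (r (Suc n))" and rN: "r (n + 2) \<noteq> r n" for n using r by (auto simp: nbseq_def)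
  have r'E: "E (r' n) (r' (Suc n))" and r'N: "r' (n + 2) \<noteq> r' n" for n using r' by (auto simp: nbseq_def)
  show "(\<lambda>n. b (int n)) = r" by (simp add: b_def)
  show "(\<lambda>n. b (- int n)) = r'" using r0 by (auto simp: b_def)
  have e: "\<forall>i. E (b i) (b (i + 1))"
  proof
    fix i :: int
    consider "0 \<le> i" | "i = -1" | "i \<le> -2" by linarith
    then show "E (b i) (b (i + 1))"
    proof cases
      case 1
      then have "nat (i + 1) = Suc (nat i)" by simp
      then show ?thesis using 1 rE by (simp add: b_def)
    next
      case 2
      then show ?thesis using r'E[of 0] r0 sym by (simp add: b_def)
    next
      case 3
      then have "nat (- i) = Suc (nat (- (i + 1)))" "\<not> 0 \<le> i + 1" by auto
      then show ?thesis using 3 r'E[of "nat (- (i + 1))"] sym by (simp add: b_def)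
    qed
  qed
  have n: "\<forall>i. b (i + 2) \<noteq> b i"
  proof
    fix i :: int
    consider "0 \<le> i" | "i = -1" | "i = -2" | "i \<le> -3" by linarith
    then show "b (i + 2) \<noteq> b i"
    proof cases
      case 1
      then have "nat (i + 2) = nat i + 2" by simp
      then show ?thesis using 1 rN by (simp add: b_def)
    next
      case 2 then show ?thesis using r1 by (simp add: b_def)
    next
      case 3
      have "r' 2 \<noteq> r' 0" using r'N[of 0] by (simp add: numeral_2_eq_2)
      then show ?thesis using 3 r0 by (simp add: b_def)
    next
      case 4
      then have "nat (- i) = nat (- (i + 2)) + 2" "\<not> 0 \<le> i + 2" by auto
      then show ?thesis using 4 r'N[of "nat (- (i + 2))"] by (simp add: b_def)
    qed
  qed
  show "biinf_path E b" using zseq_biinf[OF e n] .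
qed

lemma two_rays_ends:
  assumes b: "biinf_path E b"
  defines "\<omega>1 \<equiv> {s. inf_path E s \<and> path_equiv (\<lambda>n. b (int n)) s}"
    and "\<omega>2 \<equiv> {s. inf_path E s \<and> path_equiv (\<lambda>n. b (- int n)) s}"
  shows "is_end E \<omega>1" "is_end E \<omega>2" "\<omega>1 \<noteq> \<omega>2" "b 0 \<in> apartment E \<omega>1 \<omega>2"
    "(\<lambda>n. b (int n)) \<in> \<omega>1" "(\<lambda>n. b (- int n)) \<in> \<omega>2"
proof -
  have p1: "inf_path E (\<lambda>n. b (int n))" using nbseq_inf_path[OF biinf_nbseq[OF b, of 0]] by simp
  have p2: "inf_path E (\<lambda>n. b (- int n))"
  proof -
    have "nbseq E (\<lambda>n. b (- int n))"
    proof -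
      have bb: "biinf_path E (\<lambda>i. b (- i))" using b unfolding biinf_path_def inj_def
        by (metis add.commute diff_add_cancel minus_add_distrib minus_minus sym uminus_add_conv_diff)
      show ?thesis using biinf_nbseq[OF bb, of 0] by simp
    qed
    then show ?thesis using nbseq_inf_path by blast
  qed
  show "is_end E \<omega>1" unfolding is_end_def \<omega>1_def using p1 by blast
  show "is_end E \<omega>2" unfolding is_end_def \<omega>2_def using p2 by blast
  show m1: "(\<lambda>n. b (int n)) \<in> \<omega>1" unfolding \<omega>1_def using p1 path_equiv_refl by blast
  show m2: "(\<lambda>n. b (- int n)) \<in> \<omega>2" unfolding \<omega>2_def using p2 path_equiv_refl by blast
  show "b 0 \<in> apartment E \<omega>1 \<omega>2" unfolding apartment_def using b m1 m2 by blast
  show "\<omega>1 \<noteq> \<omega>2"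
  proof
    assume "\<omega>1 = \<omega>2"
    then have "path_equiv (\<lambda>n. b (int n)) (\<lambda>n. b (- int n))" using m2 unfolding \<omega>1_def by blast
    then obtain a c N where h: "\<forall>i>N. b (int (i + a)) = b (- int (i + c))"
      unfolding path_equiv_alt by auto
    have "b (int (Suc N + a)) = b (- int (Suc N + c))" using h by blast
    then have "int (Suc N + a) = - int (Suc N + c)" using b unfolding biinf_path_def inj_def by blast
    then show False by simp
  qed
qed

end

context tree begin

lemma apt_through:
  assumes deg: "\<And>v x. \<exists>w. E v w \<and> w \<noteq> x" and k: "dist E x y = k" "1 \<le> k"
  shows "\<exists>b. biinf_path E b \<and> b 0 = x \<and> b (int k) = y"
proof -
  obtain L where L: "walk E L" "hd L = x" "last L = y" "length L = dist E x y + 1"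
    using dist_ex by blast
  have nb: "nbw E L" using shortest_distinct[OF L] distinct_nbw L(1) by blast
  have l2: "2 \<le> length L" using L(4) k by simp
  obtain r where r: "nbseq E r" "\<forall>i<length L. r i = L ! i" using ray_extend[OF deg nb l2] by blast
  obtain r' where r': "r' 0 = r 0" "r' 1 \<noteq> r 1" "nbseq E r'" using ray_exists[OF deg] by blast
  define b where "b \<equiv> (\<lambda>i::int. if 0 \<le> i then r (nat i) else r' (nat (- i)))"
  have g: "biinf_path E b" "(\<lambda>n. b (int n)) = r"
    using glue[OF r(1) r'(3) r'(1) r'(2)] unfolding b_def by auto
  have Lne: "L \<noteq> []" using l2 by auto
  have "b 0 = x" using g(2) r(2) L(2) Lne l2 by (metis hd_conv_nth of_nat_0 zero_less_numeral less_le_trans)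
  moreover have "b (int k) = y"
  proof -
    have "b (int k) = r k" using g(2) by metis
    also have "\<dots> = L ! k" using r(2) L(4) k by simp
    also have "\<dots> = y" using L(3,4) k Lne by (simp add: last_conv_nth)
    finally show ?thesis .
  qed
  ultimately show ?thesis using g by blast
qed

lemma c3_c2:
  assumes deg: "\<And>v x. \<exists>w. E v w \<and> w \<noteq> x" and GA: "G \<subseteq> Aut E" and idG: "id \<in> G"
    and C3: "\<forall>\<omega>1 \<omega>2 \<sigma>1 \<sigma>2 x0 y0.
                 is_end E \<omega>1 \<and> is_end E \<omega>2 \<and> \<omega>1 \<noteq> \<omega>2 \<and>
                 is_end E \<sigma>1 \<and> is_end E \<sigma>2 \<and> \<sigma>1 \<noteq> \<sigma>2 \<and>
                 x0 \<in> apartment E \<omega>1 \<omega>2 \<and> y0 \<in> apartment E \<sigma>1 \<sigma>2 \<longrightarrow>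
                 (\<exists>g\<in>G. g x0 = y0 \<and> end_image g \<omega>1 = \<sigma>1 \<and> end_image g \<omega>2 = \<sigma>2)"
    and d: "dist E x y = dist E x z"
  shows "\<exists>g\<in>G. g x = x \<and> g y = z"
proof (cases "dist E x y = 0")
  case True
  then have "y = x" "z = x" using d dist_0 by auto
  then show ?thesis using idG by (metis id_apply)
next
  case False
  define k where "k = dist E x y"
  have k1: "1 \<le> k" using False k_def by simp
  obtain b where b: "biinf_path E b" "b 0 = x" "b (int k) = y" using apt_through[OF deg k_def[symmetric] k1] by blast
  obtain c where c: "biinf_path E c" "c 0 = x" "c (int k) = z" using apt_through[OF deg _ k1] d k_def by metis
  let ?r = "\<lambda>n. b (int n)" and ?r' = "\<lambda>n. b (- int n)"
  let ?\<rho> = "\<lambda>n. c (int n)" and ?\<rho>' = "\<lambda>n. c (- int n)"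
  define \<omega>1 where "\<omega>1 = {s. inf_path E s \<and> path_equiv ?r s}"
  define \<omega>2 where "\<omega>2 = {s. inf_path E s \<and> path_equiv ?r' s}"
  define \<sigma>1 where "\<sigma>1 = {s. inf_path E s \<and> path_equiv ?\<rho> s}"
  define \<sigma>2 where "\<sigma>2 = {s. inf_path E s \<and> path_equiv ?\<rho>' s}"
  note B = two_rays_ends[OF b(1), folded \<omega>1_def \<omega>2_def]
  note C = two_rays_ends[OF c(1), folded \<sigma>1_def \<sigma>2_def]
  obtain g where g: "g \<in> G" "g (b 0) = c 0" "end_image g \<omega>1 = \<sigma>1"
    using C3 B C by blast
  have gA: "g \<in> Aut E" using g GA by blast
  have gd: "dist E (g u) (g v) = dist E u v" for u v using gA by (simp add: Aut_def)
  have gx: "g x = x" using g b c by simp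
  have "g \<circ> ?r \<in> \<sigma>1" using g(3) B(5) unfolding end_image_def by blast
  then have "path_equiv ?\<rho> (g \<circ> ?r)" unfolding \<sigma>1_def by blast
  then obtain a a' N where h: "\<forall>i>N. ?\<rho> (i + a) = (g \<circ> ?r) (i + a')" unfolding path_equiv_alt by blast
  have nr: "nbseq E ?r" using biinf_nbseq[OF b(1), of 0] by simp
  have n\<rho>: "nbseq E ?\<rho>" using biinf_nbseq[OF c(1), of 0] by simp
  define i where "i = N + 1 + k"
  have "i > N" using i_def by simp
  then have hi: "c (int (i + a)) = g (b (int (i + a')))" using h by (simp only: o_apply)
  have "dist E x (c (int (i + a))) = i + a" using nbseq_dist[OF n\<rho>, of 0 "i + a"] c(2) by simp
  moreover have "dist E x (g (b (int (i + a')))) = i + a'"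
    using nbseq_dist[OF nr, of 0 "i + a'"] b(2) gd[of x] gx by simp
  ultimately have aa: "a = a'" using hi by simp
  define t where "t = i + a"
  have kt: "k \<le> t" using t_def i_def by simp
  have ct: "c (int t) = g (b (int t))" using hi aa t_def by simp
  have dxt: "dist E x (c (int t)) = t" using nbseq_dist[OF n\<rho>, of 0 t] c(2) by simp
  have "g y = z"
  proof (rule between_unique[of x _ "c (int t)"])
    show "dist E x (g y) + dist E (g y) (c (int t)) = dist E x (c (int t))"
    proof -
      have "dist E x (g y) = k" using gd[of x y] gx k_def by simp
      moreover have "dist E (g y) (c (int t)) = t - k"
        using ct gd b(3) nbseq_dist[OF nr, of k "t - k"] kt by simp
      ultimately show ?thesis using dxt kt by simp
    qed
    show "dist E x z + dist E z (c (int t)) = dist E x (c (int t))"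
    proof -
      have "dist E x z = k" using d k_def by simp
      moreover have "dist E z (c (int t)) = t - k"
        using c(3) nbseq_dist[OF n\<rho>, of k "t - k"] kt by simp
      ultimately show ?thesis using dxt kt by simp
    qed
    show "dist E x (g y) = dist E x z" using gd[of x y] gx d by simp
  qed
  then show ?thesis using g gx by blast
qed

end

context tree begin

lemma iso_surj:
  assumes fin: "\<And>v. finite {w. E v w}" and cd: "\<And>v. card {w. E v w} = M"
    and f: "\<And>x y. dist E (f x) (f y) = dist E x y"
  shows "surj f"
proof -
  have inj: "inj f" using f dist_0 by (metis dist_self injI)
  have nb: "f ` {w. E u w} = {w. E (f u) w}" for u
  proof (rule card_subset_eq)
    show "finite {w. E (f u) w}" using fin .
    show "f ` {w. E u w} \<subseteq> {w. E (f u) w}" by (auto simp flip: dist_1 simp: f)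
    show "card (f ` {w. E u w}) = card {w. E (f u) w}"
      using cd card_image inj by (metis inj_on_subset subset_UNIV)
  qed
  fix a
  have "\<forall>y. dist E (f a) y = n \<longrightarrow> y \<in> range f" for n
  proof (induction n)
    case 0 then show ?case using dist_0 by blast
  next
    case (Suc n)
    show ?case
    proof (intro allI impI)
      fix y assume "dist E (f a) y = Suc n"
      then obtain v where v: "E v y" "dist E (f a) v = n" using dist_Suc by blast
      then obtain u where u: "v = f u" using Suc by blast
      then have "y \<in> {w. E (f u) w}" using v by simp
      then show "y \<in> range f" using nb by blast
    qed
  qed
  then show "surj f" by blast
qed

lemma limit_exists:
  assumes fin: "\<And>v. finite {w. E v w}"
    and dec: "\<And>n. A (Suc n) \<subseteq> A n" and ne: "\<And>n. A n \<noteq> {}"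
    and iso: "\<And>g x y. g \<in> A 0 \<Longrightarrow> dist E (g x) (g y) = dist E x y"
    and pq: "\<And>g. g \<in> A 0 \<Longrightarrow> g p = q"
  shows "\<exists>f. (\<forall>x y. dist E (f x) (f y) = dist E x y) \<and>
             (\<forall>n F. finite F \<longrightarrow> (\<exists>g\<in>A n. \<forall>x\<in>F. g x = f x))"
proof -
  have decA: "m \<le> n \<Longrightarrow> A n \<subseteq> A m" for m n
    using lift_Suc_antimono_le[of A] dec by blast
  define B where "B = (\<lambda>v. {y. dist E q y \<le> dist E p v})"
  define X where "X = product_topology (\<lambda>v. discrete_topology (B v)) (UNIV :: 'a set)"
  have tX: "topspace X = Pi UNIV B" by (simp add: X_def PiE_UNIV_domain)
  have comp: "compact_space X" unfolding X_def
    using compact_space_product_topology compact_space_discrete_topology ball_finite[OF fin]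
    by (metis B_def)
  have inX: "g \<in> topspace X" if "g \<in> A n" for g n
  proof -
    have g0: "g \<in> A 0" using that decA by blast
    show ?thesis unfolding tX B_def using iso[OF g0, of p] pq[OF g0] by (auto simp: Pi_def)
  qed
  define K where "K = (\<lambda>n. {h \<in> topspace X. \<forall>F. finite F \<longrightarrow> (\<exists>g\<in>A n. \<forall>x\<in>F. g x = h x)})"
  have clo: "closedin X (K n)" for n
    unfolding closedin_def
  proof
    show "K n \<subseteq> topspace X" by (auto simp: K_def)
    show "openin X (topspace X - K n)"
    proof (subst openin_subopen, intro ballI)
      fix h assume h: "h \<in> topspace X - K n"
      then obtain F where F: "finite F" "\<forall>g\<in>A n. \<exists>x\<in>F. g x \<noteq> h x" by (auto simp: K_def)
      define U where "U = (\<lambda>x. {h' \<in> topspace X. h' x \<in> {h x}})"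
      have oU: "openin X (U x)" for x
      proof -
        have "continuous_map X (discrete_topology (B x)) (\<lambda>h. h x)"
          unfolding X_def by (rule continuous_map_product_projection) simp
        moreover have "openin (discrete_topology (B x)) {h x}" using h tX by auto
        ultimately show ?thesis unfolding U_def by (rule openin_continuous_map_preimage)
      qed
      let ?T = "(\<Inter>x\<in>F. U x) \<inter> topspace X"
      have "openin X ?T" using openin_INT[OF F(1)] oU by blast
      moreover have "h \<in> ?T" using h by (auto simp: U_def)
      moreover have "?T \<subseteq> topspace X - K n"
      proof
        fix h' assume h': "h' \<in> ?T"
        have "h' \<notin> K n"
        proof
          assume "h' \<in> K n"
          then obtain g where "g \<in> A n" "\<forall>x\<in>F. g x = h' x" using F(1) by (auto simp: K_def)
          then show False using F(2) h' by (auto simp: U_def)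
        qed
        then show "h' \<in> topspace X - K n" using h' by blast
      qed
      ultimately show "\<exists>T. openin X T \<and> h \<in> T \<and> T \<subseteq> topspace X - K n" by blast
    qed
  qed
  have Kne: "K n \<noteq> {}" for n
  proof -
    obtain g where "g \<in> A n" using ne by blast
    then have "g \<in> K n" using inX by (auto simp: K_def)
    then show ?thesis by blast
  qed
  have Kdec: "decseq K" unfolding decseq_def K_def using decA by blast
  obtain f where f: "f \<in> (\<Inter>n. K n)" using compact_space_imp_nest[OF comp clo Kne Kdec] by blast
  have fK: "\<forall>n F. finite F \<longrightarrow> (\<exists>g\<in>A n. \<forall>x\<in>F. g x = f x)" using f by (auto simp: K_def)
  have "dist E (f x) (f y) = dist E x y" for x y
  proof -
    obtain g where g: "g \<in> A 0" "\<forall>z\<in>{x, y}. g z = f z" using fK by (metis finite.emptyI finite_insert)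
    then show ?thesis using iso[OF g(1), of x y] by simp
  qed
  then show ?thesis using fK by blast
qed

end

lemma shift_plus: "path_equiv (\<lambda>n. b0 (int n)) (\<lambda>n. b0 (int n + j))"
proof -
  obtain a a' :: nat where aa: "int a = int a' + j"
    by (metis add.commute add.right_neutral int_nat_eq nat_0_le of_nat_0 uminus_add_conv_diff
        diff_add_cancel le_cases neg_0_le_iff_le)
  have "\<forall>i>0. b0 (int (i + a)) = b0 (int (i + a') + j)" using aa by (simp add: algebra_simps)
  then show ?thesis unfolding path_equiv_alt by blast
qed

lemma shift_minus: "path_equiv (\<lambda>n. b0 (- int n)) (\<lambda>n. b0 (- int n + j))"
proof -
  obtain a a' :: nat where aa: "- int a = - int a' + j"
    by (metis add.commute add.right_neutral int_nat_eq nat_0_le of_nat_0 uminus_add_conv_diff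
        diff_add_cancel le_cases neg_0_le_iff_le minus_minus)
  have "\<forall>i>0. b0 (- int (i + a)) = b0 (- int (i + a') + j)" using aa by (simp add: algebra_simps)
  then show ?thesis unfolding path_equiv_alt by blast
qed

context tree begin

lemma apt_norm:
  assumes e1: "is_end E \<omega>1" and e2: "is_end E \<omega>2" and x0: "x0 \<in> apartment E \<omega>1 \<omega>2"
  shows "\<exists>b. biinf_path E b \<and> b 0 = x0 \<and> \<omega>1 = {s. inf_path E s \<and> path_equiv (\<lambda>n. b (int n)) s}
             \<and> \<omega>2 = {s. inf_path E s \<and> path_equiv (\<lambda>n. b (- int n)) s}"
proof -
  obtain b0 j where b0: "biinf_path E b0" "(\<lambda>n. b0 (int n)) \<in> \<omega>1" "(\<lambda>n. b0 (- int n)) \<in> \<omega>2" "x0 = b0 j"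
    using x0 unfolding apartment_def by blast
  define b where "b = (\<lambda>i. b0 (i + j))"
  have bb: "biinf_path E b" using b0(1) unfolding biinf_path_def b_def inj_def
    by (metis add.commute add.left_commute add_right_cancel)
  have 1: "\<omega>1 = {s. inf_path E s \<and> path_equiv (\<lambda>n. b0 (int n)) s}" using end_class[OF e1 b0(2)] .
  have 2: "\<omega>2 = {s. inf_path E s \<and> path_equiv (\<lambda>n. b0 (- int n)) s}" using end_class[OF e2 b0(3)] .
  note T = two_rays_ends[OF bb]
  have ip: "inf_path E (\<lambda>n. b (int n))" "inf_path E (\<lambda>n. b (- int n))" using T(5,6) by auto
  have "(\<lambda>n. b (int n)) \<in> \<omega>1" using 1 ip shift_plus[of b0 j] by (simp add: b_def)
  then have w1: "\<omega>1 = {s. inf_path E s \<and> path_equiv (\<lambda>n. b (int n)) s}" using end_class[OF e1] by blast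
  have "(\<lambda>n. b (- int n)) \<in> \<omega>2" using 2 ip shift_minus[of b0 j] by (simp add: b_def)
  then have w2: "\<omega>2 = {s. inf_path E s \<and> path_equiv (\<lambda>n. b (- int n)) s}" using end_class[OF e2] by blast
  have "b 0 = x0" using b0(4) by (simp add: b_def)
  then show ?thesis using bb w1 w2 by blast
qed

lemma c1_c3:
  assumes fin: "\<And>v. finite {w. E v w}" and cd: "\<And>v. card {w. E v w} = M"
    and GA: "G \<subseteq> Aut E" and cl: "closed_in_Aut E G"
    and C1: "\<forall>x1 x2 y1 y2. dist E x1 x2 = dist E y1 y2 \<longrightarrow> (\<exists>g\<in>G. g x1 = y1 \<and> g x2 = y2)"
    and e: "is_end E \<omega>1" "is_end E \<omega>2" "is_end E \<sigma>1" "is_end E \<sigma>2"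
    and x0: "x0 \<in> apartment E \<omega>1 \<omega>2" and y0: "y0 \<in> apartment E \<sigma>1 \<sigma>2"
  shows "\<exists>g\<in>G. g x0 = y0 \<and> end_image g \<omega>1 = \<sigma>1 \<and> end_image g \<omega>2 = \<sigma>2"
proof -
  obtain b where b: "biinf_path E b" "b 0 = x0" "\<omega>1 = {s. inf_path E s \<and> path_equiv (\<lambda>n. b (int n)) s}"
             "\<omega>2 = {s. inf_path E s \<and> path_equiv (\<lambda>n. b (- int n)) s}"
    using apt_norm[OF e(1,2) x0] by blast
  obtain c where c: "biinf_path E c" "c 0 = y0" "\<sigma>1 = {s. inf_path E s \<and> path_equiv (\<lambda>n. c (int n)) s}"
             "\<sigma>2 = {s. inf_path E s \<and> path_equiv (\<lambda>n. c (- int n)) s}"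
    using apt_norm[OF e(3,4) y0] by blast
  have gd: "dist E (g u) (g v) = dist E u v" if "g \<in> G" for g u v
    using that GA by (auto simp: Aut_def)
  define A where "A = (\<lambda>n::nat. {g \<in> G. \<forall>k. \<bar>k\<bar> \<le> int n \<longrightarrow> g (b k) = c k})"
  have ne: "A n \<noteq> {}" for n
  proof -
    have db: "dist E (b (- int n)) (b (int n)) = 2 * n" using biinf_dist[OF b(1), of "- int n" "int n"] by simp
    have dc: "dist E (c (- int n)) (c (int n)) = 2 * n" using biinf_dist[OF c(1), of "- int n" "int n"] by simp
    obtain g where g: "g \<in> G" "g (b (- int n)) = c (- int n)" "g (b (int n)) = c (int n)"
      using C1 db dc by metis
    have "g (b k) = c k" if k: "\<bar>k\<bar> \<le> int n" for k
    proof (rule between_unique[of "c (- int n)" _ "c (int n)"])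
      have d1: "dist E (b (- int n)) (b k) = nat (k + int n)" using biinf_dist[OF b(1), of "- int n" k] k by simp
      have d2: "dist E (b k) (b (int n)) = nat (int n - k)" using biinf_dist[OF b(1), of k "int n"] k by simp
      have d1': "dist E (c (- int n)) (c k) = nat (k + int n)" using biinf_dist[OF c(1), of "- int n" k] k by simp
      have d2': "dist E (c k) (c (int n)) = nat (int n - k)" using biinf_dist[OF c(1), of k "int n"] k by simp
      have s: "nat (k + int n) + nat (int n - k) = 2 * n" using k by simp
      show "dist E (c (- int n)) (g (b k)) + dist E (g (b k)) (c (int n)) = dist E (c (- int n)) (c (int n))"
        using d1 d2 s dc gd[OF g(1)] g(2,3) by metis
      show "dist E (c (- int n)) (c k) + dist E (c k) (c (int n)) = dist E (c (- int n)) (c (int n))"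
        using d1' d2' s dc by simp
      show "dist E (c (- int n)) (g (b k)) = dist E (c (- int n)) (c k)"
        using d1 d1' gd[OF g(1)] g(2) by metis
    qed
    then have "g \<in> A n" using g(1) by (simp add: A_def)
    then show ?thesis by blast
  qed
  have dec: "A (Suc n) \<subseteq> A n" for n by (auto simp: A_def)
  have iso: "dist E (g x) (g y) = dist E x y" if "g \<in> A 0" for g x y using that gd by (auto simp: A_def)
  have pq: "g (b 0) = c 0" if "g \<in> A 0" for g using that by (auto simp: A_def)
  have ex: "\<exists>f. (\<forall>x y. dist E (f x) (f y) = dist E x y) \<and>
             (\<forall>n F. finite F \<longrightarrow> (\<exists>g\<in>A n. \<forall>x\<in>F. g x = f x))"
    apply (rule limit_exists[where A=A and p="b 0" and q="c 0"])
    using fin dec ne iso pq by auto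
  obtain f where f: "\<forall>x y. dist E (f x) (f y) = dist E x y"
      "\<forall>n F. finite F \<longrightarrow> (\<exists>g\<in>A n. \<forall>x\<in>F. g x = f x)"
    using ex by blast
  have inj: "inj f" using f(1) dist_0 by (metis dist_self injI)
  have surj: "surj f" using iso_surj[OF fin cd] f(1) by blast
  have fA: "f \<in> Aut E" unfolding Aut_def using inj surj f(1) bij_def by blast
  have fG: "f \<in> G"
  proof -
    have "\<forall>F. finite F \<longrightarrow> (\<exists>g\<in>G. \<forall>x\<in>F. g x = f x)" using f(2)[rule_format, where n=0] by (auto simp: A_def)
    then show ?thesis using cl fA unfolding closed_in_Aut_def by blast
  qed
  have fbc: "f (b k) = c k" for k
  proof -
    obtain g where "g \<in> A (nat \<bar>k\<bar>)" "g (b k) = f (b k)" using f(2)[rule_format, where n="nat \<bar>k\<bar>" and F="{b k}"] by auto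
    then show ?thesis by (simp add: A_def)
  qed
  have p1: "f \<circ> (\<lambda>n. b (int n)) = (\<lambda>n. c (int n))" using fbc by auto
  have p2: "f \<circ> (\<lambda>n. b (- int n)) = (\<lambda>n. c (- int n))" using fbc by auto
  note Tb = two_rays_ends[OF b(1)]
  have ib: "inf_path E (\<lambda>n. b (int n))" "inf_path E (\<lambda>n. b (- int n))" using Tb(5,6) by auto
  have "end_image f \<omega>1 = \<sigma>1" using end_image_class[OF fA ib(1)] b(3) c(3) p1 by simp
  moreover have "end_image f \<omega>2 = \<sigma>2" using end_image_class[OF fA ib(2)] b(4) c(4) p2 by simp
  moreover have "f x0 = y0" using fbc[of 0] b(2) c(2) by simp
  ultimately show ?thesis using fG by blast
qed

end

theorem mainTheorem1:
  fixes E :: "'a \<Rightarrow> 'a \<Rightarrow> bool" and G :: "('a \<Rightarrow> 'a) set"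
  assumes "bruhat_tits_tree E"
    and "is_subgroup E G"
    and "closed_in_Aut E G"
    and "vertex_transitive G"
  defines "C1 \<equiv> (\<forall>x1 x2 y1 y2. dist E x1 x2 = dist E y1 y2 \<longrightarrow>
                    (\<exists>g\<in>G. g x1 = y1 \<and> g x2 = y2))"
    and "C2 \<equiv> (\<forall>x y z. dist E x y = dist E x z \<longrightarrow> (\<exists>g\<in>G. g x = x \<and> g y = z))"
    and "C3 \<equiv> (\<forall>\<omega>1 \<omega>2 \<sigma>1 \<sigma>2 x0 y0.
                 is_end E \<omega>1 \<and> is_end E \<omega>2 \<and> \<omega>1 \<noteq> \<omega>2 \<and>
                 is_end E \<sigma>1 \<and> is_end E \<sigma>2 \<and> \<sigma>1 \<noteq> \<sigma>2 \<and>
                 x0 \<in> apartment E \<omega>1 \<omega>2 \<and> y0 \<in> apartment E \<sigma>1 \<sigma>2 \<longrightarrow>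
                 (\<exists>g\<in>G. g x0 = y0 \<and> end_image g \<omega>1 = \<sigma>1 \<and> end_image g \<omega>2 = \<sigma>2))"
  shows "(C1 \<longleftrightarrow> C2) \<and> (C2 \<longleftrightarrow> C3) \<and> ((C1 \<or> C2 \<or> C3) \<longrightarrow> weakly_two_transitive E G)"
proof -
  have tr: "is_tree E" and "\<exists>m::nat. m \<ge> 2 \<and> (\<forall>v. finite {w. E v w} \<and> card {w. E v w} = m + 1)"
    using assms(1) unfolding bruhat_tits_tree_def by auto
  then obtain m :: nat where m: "m \<ge> 2" "\<And>v. finite {w. E v w}" "\<And>v. card {w. E v w} = m + 1" by blast
  interpret tree E using tr by unfold_locales
  have GA: "G \<subseteq> Aut E" and idG: "id \<in> G" and comp: "\<forall>f\<in>G. \<forall>g\<in>G. f \<circ> g \<in> G"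
    using assms(2) unfolding is_subgroup_def by auto
  have deg: "\<exists>w. E v w \<and> w \<noteq> x" for v x
  proof -
    have "card ({w. E v w} - {x}) \<ge> m" using m card_Diff_singleton_if[of "{w. E v w}" x]
      by (simp split: if_splits)
    then have "{w. E v w} - {x} \<noteq> {}" using m(1) by (metis card.empty le_zero_eq not_numeral_le_zero)
    then show ?thesis by blast
  qed
  have gd: "dist E (g u) (g v) = dist E u v" if "g \<in> G" for g u v
    using that GA by (auto simp: Aut_def)
  have c21: "C1" if c2: C2 unfolding C1_def
  proof (intro allI impI)
    fix x1 x2 y1 y2 assume d: "dist E x1 x2 = dist E y1 y2"
    obtain h where h: "h \<in> G" "h x1 = y1" using assms(4) unfolding vertex_transitive_def by blast
    have "dist E y1 (h x2) = dist E y1 y2" using gd[OF h(1)] h(2) d by metis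
    then obtain k where k: "k \<in> G" "k y1 = y1" "k (h x2) = y2" using c2 unfolding C2_def by metis
    show "\<exists>g\<in>G. g x1 = y1 \<and> g x2 = y2" using comp h k by (intro bexI[of _ "k \<circ> h"]) auto
  qed
  have c12: "C2" if C1 using that unfolding C1_def C2_def by blast
  have c13: "C3" if C1
    unfolding C3_def
  proof (intro allI impI)
    fix \<omega>1 \<omega>2 \<sigma>1 \<sigma>2 x0 y0
    assume h: "is_end E \<omega>1 \<and> is_end E \<omega>2 \<and> \<omega>1 \<noteq> \<omega>2 \<and> is_end E \<sigma>1 \<and> is_end E \<sigma>2 \<and> \<sigma>1 \<noteq> \<sigma>2 \<and>
           x0 \<in> apartment E \<omega>1 \<omega>2 \<and> y0 \<in> apartment E \<sigma>1 \<sigma>2"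
    show "\<exists>g\<in>G. g x0 = y0 \<and> end_image g \<omega>1 = \<sigma>1 \<and> end_image g \<omega>2 = \<sigma>2"
      using c1_c3[OF m(2) m(3) GA assms(3), of \<omega>1 \<omega>2 \<sigma>1 \<sigma>2 x0 y0] that h unfolding C1_def by blast
  qed
  have c32: "C2" if C3 unfolding C2_def
  proof (intro allI impI)
    fix x y z assume "dist E x y = dist E x z"
    then show "\<exists>g\<in>G. g x = x \<and> g y = z" using c3_c2[OF deg GA idG] that unfolding C3_def by blast
  qed
  have "C1 \<longleftrightarrow> C2" using c21 c12 by blast
  moreover have "C2 \<longleftrightarrow> C3" using c21 c13 c32 by blast
  moreover have "C1 = weakly_two_transitive E G" unfolding C1_def weakly_two_transitive_def ..
  ultimately show ?thesis by blast
qed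

end
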